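(* Let $q\ge 1$ and let $\chi$ be a probability distribution on $[q]=\{1,\dots,q\}$, with $p_k$ the probability of the element $k$. For each $k$, let $\chi/k$ be the distribution on the $q-1$ elements $[q]\setminus\{k\}$ obtained by removing $k$ and renormalizing the remaining probabilities. Then for every integer $m\ge 1$, \[P_{\chi}(m,q)=P_{\chi}(m-1,q)+\sum_{k=1}^q p_k(1-p_k)^{m-1}\, P_{\chi/k}(m-1,q-1).\]
   Context: For a distribution $\chi$ on a finite set of size $q$, $P_\chi(m,q)$ denotes the probability that $m$ independent samples drawn from $\chi$ "smear", i.e. every element of the set is drawn at least once. Conventions for degenerate cases: $P_\chi(m,0)=1$ for all $m\ge 0$ (the empty set is always covered), $P_\chi(0,q)=0$ for $q\ge1$; if $p_k=1$, then $\chi/k$ may be taken to be any distribution on $[q]\setminus\{k\}$. *)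

theory Defs
  imports Complex_Main
begin

text \<open>Probability that m independent samples from the distribution with point
  probabilities p (on the finite set A) cover every element of A. Convention: the empty set is always covered.\<close>
definition smear_prob :: "('a \<Rightarrow> real) \<Rightarrow> 'a set \<Rightarrow> nat \<Rightarrow> real" where
  "smear_prob p A m =
     (if A = {} then 1
      else (\<Sum>xs\<in>{xs. set xs \<subseteq> A \<and> length xs = m}.
              if set xs = A then prod_list (map p xs) else 0))"

end

theory Submission imports Defs begin

definition LS :: "'a set \<Rightarrow> nat \<Rightarrow> 'a list set" where
  "LS A n = {xs. set xs \<subseteq> A \<and> length xs = n}"

lemma LS_finite: "finite A \<Longrightarrow> finite (LS A n)"
  unfolding LS_def by (rule finite_lists_length_eq)

lemma LS_Suc: "LS A (Suc n) = (\<lambda>(x,ys). x # ys) ` (A \<times> LS A n)"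
  unfolding LS_def
  by (auto simp: length_Suc_conv image_iff)

lemma sum_LS_Suc:
  assumes "finite A"
  shows "(\<Sum>xs\<in>LS A (Suc n). f xs) = (\<Sum>x\<in>A. \<Sum>ys\<in>LS A n. f (x # ys))"
proof -
  have inj: "inj_on (\<lambda>(x,ys). x # ys) (A \<times> LS A n)" by (auto simp: inj_on_def)
  have "(\<Sum>xs\<in>LS A (Suc n). f xs) = (\<Sum>z\<in>A \<times> LS A n. f ((\<lambda>(x,ys). x # ys) z))"
    unfolding LS_Suc by (rule sum.reindex[OF inj, unfolded comp_def])
  also have "\<dots> = (\<Sum>x\<in>A. \<Sum>ys\<in>LS A n. f (x # ys))"
    unfolding sum.cartesian_product by (intro sum.cong refl) auto
  finally show ?thesis .
qed

lemma restrict: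
  assumes "finite A" "B \<subseteq> A"
  shows "(\<Sum>ys\<in>LS A n. if set ys = B then g ys else 0) = (\<Sum>ys\<in>LS B n. if set ys = B then g ys else (0::real))"
  by (rule sum.mono_neutral_right[OF LS_finite[OF assms(1)]]) (use assms in \<open>auto simp: LS_def\<close>)

lemma step:
  assumes "finite A"
  shows "(\<Sum>xs\<in>LS A (Suc n). if set xs = A then prod_list (map p xs) else 0)
    = (\<Sum>x\<in>A. p x) * (\<Sum>ys\<in>LS A n. if set ys = A then prod_list (map p ys) else (0::real))
      + (\<Sum>x\<in>A. p x * (\<Sum>ys\<in>LS (A - {x}) n. if set ys = A - {x} then prod_list (map p ys) else 0))"
proof -
  have eq: "(if set (x # ys) = A then prod_list (map p (x # ys)) else 0)
     = p x * (if set ys = A then prod_list (map p ys) else 0)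
       + p x * (if set ys = A - {x} then prod_list (map p ys) else 0)"
    if "x \<in> A" "ys \<in> LS A n" for x ys
  proof -
    have sub: "set ys \<subseteq> A" using that by (auto simp: LS_def)
    have "set (x # ys) = A \<longleftrightarrow> set ys = A \<or> set ys = A - {x}"
      using sub that(1) by auto
    moreover have "\<not> (set ys = A \<and> set ys = A - {x})" using that(1) by auto
    ultimately show ?thesis
    proof (cases "set ys = A")
      case True
      moreover have "A \<noteq> A - {x}" using that(1) by auto
      ultimately show ?thesis using that(1) by (simp add: insert_absorb)
    next
      case F: False
      show ?thesis
      proof (cases "set ys = A - {x}")
        case True
        then have "set (x # ys) = A" using that(1) by auto
        then show ?thesis using True F by simp
      next
        case False
        then have "set (x # ys) \<noteq> A" using F sub that(1) by auto
        then show ?thesis using False F by (simp only: if_False)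
      qed
    qed
  qed
  have "(\<Sum>xs\<in>LS A (Suc n). if set xs = A then prod_list (map p xs) else 0)
     = (\<Sum>x\<in>A. \<Sum>ys\<in>LS A n. p x * (if set ys = A then prod_list (map p ys) else 0)
       + p x * (if set ys = A - {x} then prod_list (map p ys) else 0))"
    unfolding sum_LS_Suc[OF assms]
    apply (rule sum.cong[OF refl])
    apply (rule sum.cong[OF refl])
    apply (rule eq)
    by assumption+
  also have "\<dots> = (\<Sum>x\<in>A. p x * (\<Sum>ys\<in>LS A n. if set ys = A then prod_list (map p ys) else 0))
       + (\<Sum>x\<in>A. p x * (\<Sum>ys\<in>LS A n. if set ys = A - {x} then prod_list (map p ys) else 0))"
    by (simp add: sum.distrib sum_distrib_left)
  also have "\<dots> = (\<Sum>x\<in>A. p x) * (\<Sum>ys\<in>LS A n. if set ys = A then prod_list (map p ys) else (0::real))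
      + (\<Sum>x\<in>A. p x * (\<Sum>ys\<in>LS (A - {x}) n. if set ys = A - {x} then prod_list (map p ys) else 0))"
    by (simp add: sum_distrib_right restrict[OF assms, of "A - {_}"] del: sum.distrib)
  finally show ?thesis .
qed

lemma prod_scale:
  assumes "(c::real) \<noteq> 0"
  shows "prod_list (map p ys) = c ^ length ys * prod_list (map (\<lambda>x. p x / c) ys)"
  using assms by (induction ys) (auto simp: field_simps)

lemma LS_empty: "LS {} n = (if n = 0 then {[]} else {})"
  unfolding LS_def by auto

lemma smear_LS: "A \<noteq> {} \<Longrightarrow> smear_prob p A m = (\<Sum>xs\<in>LS A m. if set xs = A then prod_list (map p xs) else 0)"
  unfolding smear_prob_def LS_def by simp

theorem mainTheorem3:
  fixes q m :: nat and p :: "nat \<Rightarrow> real" and d :: "nat \<Rightarrow> nat \<Rightarrow> real"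
  assumes "q \<ge> 1"
    and "\<forall>k\<in>{1..q}. p k \<ge> 0"
    and "(\<Sum>k=1..q. p k) = 1"
    and "\<forall>k\<in>{1..q}. p k \<noteq> 1 \<longrightarrow> (\<forall>x\<in>{1..q} - {k}. d k x = p x / (1 - p k))"
    and "\<forall>k\<in>{1..q}. p k = 1 \<longrightarrow>
           (\<forall>x\<in>{1..q} - {k}. d k x \<ge> 0) \<and>
           ({1..q} - {k} \<noteq> {} \<longrightarrow> (\<Sum>x\<in>{1..q} - {k}. d k x) = 1)"
    and "m \<ge> 1"
  shows "smear_prob p {1..q} m =
           smear_prob p {1..q} (m - 1)
           + (\<Sum>k=1..q. p k * (1 - p k) ^ (m - 1) * smear_prob (d k) ({1..q} - {k}) (m - 1))"
proof -
  define A where "A = {1..q}"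
  define n where "n = m - 1"
  have m: "m = Suc n" using assms(6) unfolding n_def by simp
  have fin: "finite A" and ne: "A \<noteq> {}" using assms(1) unfolding A_def by auto
  have sum1: "sum p A = 1" using assms(3) unfolding A_def by simp
  have key: "p k * (\<Sum>ys\<in>LS (A - {k}) n. if set ys = A - {k} then prod_list (map p ys) else 0)
      = p k * (1 - p k) ^ n * smear_prob (d k) (A - {k}) n" if k: "k \<in> A" for k
  proof (cases "A - {k} = {}")
    case True
    then have "A = {k}" using k by auto
    then have "p k = 1" using sum1 by simp
    then show ?thesis unfolding True by (simp add: LS_empty smear_prob_def)
  next
    case Bne: False
    show ?thesis
    proof (cases "p k = 1")
      case True
      have "sum p A = p k + sum p (A - {k})" using fin k by (simp add: sum.remove)
      then have "sum p (A - {k}) = 0" using True sum1 by simp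
      then have z: "\<forall>x\<in>A - {k}. p x = 0"
        using sum_nonneg_eq_0_iff[of "A - {k}" p] fin assms(2) unfolding A_def by auto
      have "(\<Sum>ys\<in>LS (A - {k}) n. if set ys = A - {k} then prod_list (map p ys) else 0) = 0"
      proof (intro sum.neutral ballI)
        fix ys assume "ys \<in> LS (A - {k}) n"
        show "(if set ys = A - {k} then prod_list (map p ys) else 0) = 0"
        proof (cases "set ys = A - {k}")
          case True
          then obtain x where "x \<in> set ys" "x \<in> A - {k}" using Bne by auto
          then have "0 \<in> set (map p ys)" using z by force
          then have "prod_list (map p ys) = 0" by (simp only: prod_list_zero_iff)
          then show ?thesis using True by simp
        qed simp
      qed
      moreover have "(1 - p k) ^ n * smear_prob (d k) (A - {k}) n = 0"
      proof (cases n)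
        case 0
        then show ?thesis using Bne by (simp add: smear_prob_def)
      qed (simp add: True)
      ultimately show ?thesis by simp
    next
      case False
      then have c: "1 - p k \<noteq> 0" by simp
      have dk: "\<forall>x\<in>A - {k}. d k x = p x / (1 - p k)" using assms(4) k False unfolding A_def by auto
      have "(\<Sum>ys\<in>LS (A - {k}) n. if set ys = A - {k} then prod_list (map p ys) else 0)
          = (\<Sum>ys\<in>LS (A - {k}) n. (1 - p k) ^ n * (if set ys = A - {k} then prod_list (map (d k) ys) else 0))"
      proof (rule sum.cong[OF refl])
        fix ys assume ys: "ys \<in> LS (A - {k}) n"
        then have len: "length ys = n" and sub: "set ys \<subseteq> A - {k}" by (auto simp: LS_def)
        have me: "map (d k) ys = map (\<lambda>x. p x / (1 - p k)) ys" using sub dk by auto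
        show "(if set ys = A - {k} then prod_list (map p ys) else 0)
          = (1 - p k) ^ n * (if set ys = A - {k} then prod_list (map (d k) ys) else 0)"
          unfolding me using prod_scale[OF c, of p ys] len by simp
      qed
      also have "\<dots> = (1 - p k) ^ n * smear_prob (d k) (A - {k}) n"
        by (simp add: smear_LS[OF Bne] sum_distrib_left)
      finally show ?thesis by simp
    qed
  qed
  have "smear_prob p A m = sum p A * smear_prob p A n
      + (\<Sum>x\<in>A. p x * (\<Sum>ys\<in>LS (A - {x}) n. if set ys = A - {x} then prod_list (map p ys) else 0))"
    unfolding m smear_LS[OF ne] by (rule step[OF fin])
  also have "\<dots> = smear_prob p A n + (\<Sum>k\<in>A. p k * (1 - p k) ^ n * smear_prob (d k) (A - {k}) n)"
    using sum.cong[OF refl key, of A] sum1 by simp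
  finally show ?thesis unfolding A_def n_def .
qed

end
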